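(* In $\mathbb{Q}(b)[[q]]$, \[ 1+\sum_{n=1}^{\infty}\frac{q^{n}}{(1-q)(1-q^{2})\cdots(1-q^{n})(1-bq)(1-bq^{2})\cdots(1-bq^{n})} =\sum_{n=0}^{\infty}(-1)^{n}q^{\binom{n+1}{2}}b^{n}\prod_{k=1}^{\infty}\frac{1}{(1-q^{k})(1-bq^{k})}. \] *)

theory Defs
  imports "HOL-Analysis.Analysis" "HOL-Computational_Algebra.Formal_Power_Series"
    "HOL-Computational_Algebra.Fraction_Field" "HOL-Computational_Algebra.Polynomial"
begin

text \<open>The field Q(b) of rational functions in an indeterminate b is rendered as the
  fraction field of the polynomial ring Q[b]; b is the class of the polynomial b.
  Infinite sums and products are taken in the (q-adic) metric topology on fps
  provided by the library.\<close>

definition bvar :: "rat poly fract" where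
  "bvar = Fract [:0, 1:] 1"

abbreviation qvar :: "rat poly fract fps" where
  "qvar \<equiv> fps_X"

abbreviation bconst :: "rat poly fract fps" where
  "bconst \<equiv> fps_const bvar"

end

theory Submission
  imports Defs
begin


definition cc :: "'a::comm_ring_1 \<Rightarrow> 'a \<Rightarrow> nat \<Rightarrow> 'a" where
  "cc q x m = (-1)^m * q^(Suc m choose 2) * x^m"

lemma cc_0[simp]: "cc q x 0 = 1" by (simp add: cc_def numeral_2_eq_2)

lemma cc_Suc: "cc q x (Suc m) = - x * q^(Suc m) * cc q x m"
proof -
  have "Suc (Suc m) choose 2 = (Suc m choose 2) + Suc m"
    by (simp add: choose_two numeral_2_eq_2)
  then show ?thesis by (simp add: cc_def power_add algebra_simps)
qed

definition RR :: "'a::comm_ring_1 \<Rightarrow> 'a \<Rightarrow> (nat \<Rightarrow> 'a) \<Rightarrow> nat \<Rightarrow> 'a" where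
  "RR q x ip N = (\<Sum>m\<le>N. cc q x m * ip (N - m))"

definition TT :: "'a::comm_ring_1 \<Rightarrow> 'a \<Rightarrow> (nat \<Rightarrow> 'a) \<Rightarrow> nat \<Rightarrow> 'a" where
  "TT q x ip N = (\<Sum>n\<le>N. q^n * (\<Prod>k\<in>{Suc n..N}. 1 - x * q^k) * ip n)"

lemma RR_Suc:
  assumes ip0: "ip 0 = 1" and ipS: "\<And>n. ip n = (1 - q^Suc n) * ip (Suc n)"
  shows "RR q x ip (Suc N) = (1 - x * q^Suc N) * RR q x ip N + q^Suc N * ip (Suc N)"
proof -
  define F where "F m = cc q x m * q^(Suc N - m) * ip (Suc N - m)" for m
  define G where "G m = cc q x m * ip (Suc N - m)" for m
  define A where "A = (\<Sum>m\<le>N. G m)"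
  define B where "B = (\<Sum>m\<le>N. F m)"
  have 1: "RR q x ip N = A - B"
  proof -
    have "RR q x ip N = (\<Sum>m\<le>N. G m - F m)"
      unfolding RR_def
    proof (rule sum.cong[OF refl])
      fix m assume "m \<in> {..N}"
      then have e: "Suc N - m = Suc (N - m)" by auto
      show "cc q x m * ip (N - m) = G m - F m"
        unfolding F_def G_def e by (subst ipS) (simp add: algebra_simps)
    qed
    then show ?thesis by (simp add: A_def B_def sum_subtractf)
  qed
  have 2: "x * q^Suc N * RR q x ip N = - (\<Sum>m\<le>N. F (Suc m))"
  proof -
    have "x * q^Suc N * RR q x ip N = (\<Sum>m\<le>N. x * q^Suc N * (cc q x m * ip (N - m)))"
      unfolding RR_def by (simp add: sum_distrib_left)
    also have "\<dots> = (\<Sum>m\<le>N. - F (Suc m))"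
    proof (rule sum.cong[OF refl])
      fix m assume "m \<in> {..N}"
      then have e: "Suc N = Suc m + (N - m)" by auto
      show "x * q^Suc N * (cc q x m * ip (N - m)) = - F (Suc m)"
        unfolding F_def cc_Suc by (subst e) (simp add: power_add algebra_simps)
    qed
    finally show ?thesis by (simp add: sum_negf)
  qed
  have 3: "(\<Sum>m\<le>N. F (Suc m)) = B + F (Suc N) - F 0"
    using sum.atMost_Suc_shift[of F N] sum.atMost_Suc[of F N] by (simp add: B_def)
  have 4: "RR q x ip (Suc N) = A + G (Suc N)"
    unfolding RR_def A_def G_def by simp
  have 5: "G (Suc N) = F (Suc N)" "F 0 = q^Suc N * ip (Suc N)"
    by (simp_all add: F_def G_def)
  have e2: "x * q^Suc N * RR q x ip N = q^Suc N * ip (Suc N) - B - F (Suc N)"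
    using 2 3 5(2) by (simp add: algebra_simps)
  have "(1 - x*q^Suc N) * RR q x ip N + q^Suc N * ip (Suc N)
       = RR q x ip N - x*q^Suc N*RR q x ip N + q^Suc N*ip (Suc N)" by (simp add: algebra_simps)
  also have "\<dots> = (A - B) - (q^Suc N * ip (Suc N) - B - F (Suc N)) + q^Suc N * ip (Suc N)"
    using 1 e2 by simp
  also have "\<dots> = A + F (Suc N)" by (simp add: algebra_simps)
  finally show ?thesis using 4 5 by simp
qed

lemma TT_Suc:
  "TT q x ip (Suc N) = (1 - x * q^Suc N) * TT q x ip N + q^Suc N * ip (Suc N)"
proof -
  have "TT q x ip (Suc N) = (\<Sum>n\<le>N. q^n * (\<Prod>k\<in>{Suc n..Suc N}. 1 - x * q^k) * ip n) + q^Suc N * ip (Suc N)"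
    unfolding TT_def by simp
  also have "(\<Sum>n\<le>N. q^n * (\<Prod>k\<in>{Suc n..Suc N}. 1 - x * q^k) * ip n)
      = (\<Sum>n\<le>N. (1 - x * q^Suc N) * (q^n * (\<Prod>k\<in>{Suc n..N}. 1 - x * q^k) * ip n))"
  proof (rule sum.cong[OF refl])
    fix n assume "n \<in> {..N}"
    then have "{Suc n..Suc N} = insert (Suc N) {Suc n..N}" by auto
    then show "q^n * (\<Prod>k\<in>{Suc n..Suc N}. 1 - x * q^k) * ip n = (1 - x * q^Suc N) * (q^n * (\<Prod>k\<in>{Suc n..N}. 1 - x * q^k) * ip n)"
      by (simp add: algebra_simps)
  qed
  finally show ?thesis by (simp add: TT_def sum_distrib_left)
qed

lemma TT_RR:
  assumes ip0: "ip 0 = 1" and ipS: "\<And>n. ip n = (1 - q^Suc n) * ip (Suc n)"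
  shows "TT q x ip N = RR q x ip N"
proof (induction N)
  case 0 then show ?case by (simp add: TT_def RR_def ip0)
next
  case (Suc N) then show ?case using RR_Suc[OF ip0 ipS] TT_Suc by metis
qed



notation fps_nth (infixl "$$" 75)


lemma X_pow_dvd_iff: "fps_X^n dvd (d::'a::comm_ring_1 fps) \<longleftrightarrow> (\<forall>i<n. d$$i = 0)"
proof
  assume "fps_X^n dvd d"
  then obtain h where "d = fps_X^n * h" by (auto elim: dvdE)
  then show "\<forall>i<n. d$$i = 0" by (simp add: fps_X_power_mult_nth)
next
  assume H: "\<forall>i<n. d$$i = 0"
  have "d = fps_X^n * fps_shift n d"
    by (rule fps_ext) (auto simp: fps_X_power_mult_nth H)
  then show "fps_X^n dvd d" by (metis dvd_triv_left)
qed

definition agr :: "nat \<Rightarrow> 'a::comm_ring_1 fps \<Rightarrow> 'a fps \<Rightarrow> bool" where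
  "agr n f g \<longleftrightarrow> fps_X^n dvd (f - g)"

lemma agr_iff: "agr n f g \<longleftrightarrow> (\<forall>i<n. f$$i = g$$i)"
  unfolding agr_def X_pow_dvd_iff by simp

lemma agr_refl[simp]: "agr n f f" by (simp add: agr_def)
lemma agr_sym: "agr n f g \<Longrightarrow> agr n g f" by (auto simp: agr_iff)
lemma agr_trans: "agr n f g \<Longrightarrow> agr n g h \<Longrightarrow> agr n f h" by (auto simp: agr_iff)
lemma agr_mono: "m \<le> n \<Longrightarrow> agr n f g \<Longrightarrow> agr m f g" by (auto simp: agr_iff)

lemma agr_add: "agr n f g \<Longrightarrow> agr n h k \<Longrightarrow> agr n (f + h) (g + k)"
  by (auto simp: agr_iff)

lemma agr_mult: assumes "agr n f g" "agr n h k" shows "agr n (f * h) (g * k)"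
proof -
  have "f * h - g * k = f * (h - k) + (f - g) * k" by (simp add: algebra_simps)
  then show ?thesis using assms unfolding agr_def by (metis dvd_add dvd_mult dvd_mult2)
qed

lemma agr_sum: "(\<And>i. i \<in> A \<Longrightarrow> agr n (f i) (g i)) \<Longrightarrow> agr n (sum f A) (sum g A)"
  by (induction A rule: infinite_finite_induct) (auto intro: agr_add)

lemma agr_prod: "(\<And>i. i \<in> A \<Longrightarrow> agr n (f i) (g i)) \<Longrightarrow> agr n (prod f A) (prod g A)"
  by (induction A rule: infinite_finite_induct) (auto intro: agr_mult)

lemma agr_inverse:
  fixes f g :: "'a::field fps"
  assumes "agr n f g" "f$$0 \<noteq> 0" "g$$0 \<noteq> 0"
  shows "agr n (inverse f) (inverse g)"
proof -
  have "inverse f - inverse g = inverse f * inverse g * (g - f)"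
    using assms(2,3)
    by (simp add: algebra_simps inverse_mult_eq_1 inverse_mult_eq_1')
  moreover have "fps_X^n dvd (g - f)" using assms(1) agr_sym unfolding agr_def by blast
  ultimately show ?thesis unfolding agr_def by simp
qed

lemma agr_eq: "(\<And>n. agr n f g) \<Longrightarrow> f = g"
  by (rule fps_ext) (meson agr_iff lessI)

lemma prod_fps_nth0: "(\<Prod>k\<in>A. f k) $$ 0 = (\<Prod>k\<in>A. f k $$ 0)"
  by (induction A rule: infinite_finite_induct) auto

lemma sum_stable:
  assumes "\<And>n i. i < n \<Longrightarrow> F n $$ i = (0::'a::comm_ring_1)" "i < M" "M \<le> N"
  shows "(\<Sum>n<N. F n) $$ i = (\<Sum>n<M. F n) $$ i"
  using assms(3)
proof (induction N rule: dec_induct)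
  case (step N)
  then show ?case using assms(1)[of i N] assms(2) by simp
qed simp

lemma fps_sums_lemma:
  fixes F :: "nat \<Rightarrow> 'a::comm_ring_1 fps"
  assumes "\<And>n i. i < n \<Longrightarrow> F n $$ i = 0"
  shows "summable F" "agr N (suminf F) (\<Sum>n<N. F n)"
proof -
  define S where "S = Abs_fps (\<lambda>i. (\<Sum>n<Suc i. F n) $$ i)"
  have "F sums S"
    unfolding sums_def
  proof (rule tendsto_fpsI)
    fix i
    show "eventually (\<lambda>N. (\<Sum>n<N. F n) $$ i = S $$ i) sequentially"
      using eventually_ge_at_top[of "Suc i"]
    proof eventually_elim
      case (elim N) then show ?case
        using sum_stable[where F=F and i=i and M="Suc i" and N=N, OF assms] by (simp add: S_def del: sum.lessThan_Suc)
    qed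
  qed
  then show "summable F" by (auto simp: summable_def)
  have "suminf F = S" using \<open>F sums S\<close> by (simp add: sums_iff)
  then show "agr N (suminf F) (\<Sum>n<N. F n)"
  proof -
    have "(\<Sum>n<N. F n) $$ i = S $$ i" if "i<N" for i
      using sum_stable[where F=F and i=i and M="Suc i" and N=N, OF assms] that by (simp add: S_def del: sum.lessThan_Suc)
    then show ?thesis using \<open>suminf F = S\<close> by (simp add: agr_iff)
  qed
qed

lemma prod_stable:
  fixes P :: "nat \<Rightarrow> 'a::comm_ring_1 fps"
  assumes "\<And>k. agr (Suc k) (P k) 1" "M \<le> N"
  shows "agr M (\<Prod>k<N. P k) (\<Prod>k<M. P k)"
  using assms(2)
proof (induction N rule: dec_induct)
  case (step N)
  have "agr M (P N) 1" by (rule agr_mono[OF _ assms(1)[of N]]) (use step(1) in simp)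
  from agr_mult[OF step(3) this] show ?case by simp
qed simp

lemma fps_prod_lemma:
  fixes P :: "nat \<Rightarrow> 'a::idom fps"
  assumes "\<And>k. agr (Suc k) (P k) 1"
  shows "convergent_prod P" "agr N (prodinf P) (\<Prod>k<N. P k)"
proof -
  define L where "L = Abs_fps (\<lambda>i. (\<Prod>k<Suc i. P k) $$ i)"
  have lim: "(\<lambda>n. \<Prod>i\<le>n. P (i+0)) \<longlonglongrightarrow> L"
  proof (rule tendsto_fpsI)
    fix i
    show "eventually (\<lambda>n. (\<Prod>i\<le>n. P (i+0)) $$ i = L $$ i) sequentially"
      using eventually_ge_at_top[of "i"]
    proof eventually_elim
      case (elim n)
      have "agr (Suc i) (\<Prod>k<Suc n. P k) (\<Prod>k<Suc i. P k)"
        by (rule prod_stable[OF assms]) (use elim in simp)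
      then have "(\<Prod>k<Suc n. P k) $$ i = (\<Prod>k<Suc i. P k) $$ i" unfolding agr_iff by blast
      then show ?case unfolding L_def lessThan_Suc_atMost by simp
    qed
  qed
  have "P 0 $$ 0 = 1" using assms[of 0] by (simp add: agr_iff)
  then have "L $$ 0 = 1" by (simp add: L_def)
  then have "L \<noteq> 0" by auto
  then have raw: "raw_has_prod P 0 L" using lim by (simp add: raw_has_prod_def)
  then show "convergent_prod P" by (auto simp: convergent_prod_def)
  have "P has_prod L" using raw by (simp add: has_prod_def)
  then have "prodinf P = L" using has_prod_unique by metis
  then show "agr N (prodinf P) (\<Prod>k<N. P k)"
  proof -
    have "(\<Prod>k<N. P k) $$ i = L $$ i" if "i < N" for i
      using prod_stable[OF assms, of "Suc i" N] that unfolding agr_iff L_def by simp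
    then show ?thesis using \<open>prodinf P = L\<close> by (simp add: agr_iff)
  qed
qed



definition Qp :: "nat \<Rightarrow> nat \<Rightarrow> 'a::field fps" where
  "Qp a N = (\<Prod>k\<in>{a..N}. 1 - fps_X^k)"
definition Bp :: "'a::field \<Rightarrow> nat \<Rightarrow> nat \<Rightarrow> 'a fps" where
  "Bp b a N = (\<Prod>k\<in>{a..N}. 1 - fps_const b * fps_X^k)"
definition ipp :: "nat \<Rightarrow> 'a::field fps" where
  "ipp N = inverse (Qp (Suc 0) N)"

lemma nth0_1: "k \<ge> 1 \<Longrightarrow> (1 - fps_X^k :: 'a::field fps) $$ 0 = 1"
  by (cases k) auto
lemma nth0_2: "k \<ge> 1 \<Longrightarrow> (1 - fps_const b * fps_X^k :: 'a::field fps) $$ 0 = 1"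
  by (cases k) auto

lemma Qp0: "a \<ge> 1 \<Longrightarrow> (Qp a N :: 'a::field fps) $$ 0 = 1"
  unfolding Qp_def prod_fps_nth0 by (rule prod.neutral) (auto intro: nth0_1)
lemma Bp0: "a \<ge> 1 \<Longrightarrow> (Bp b a N :: 'a::field fps) $$ 0 = 1"
  unfolding Bp_def prod_fps_nth0 by (rule prod.neutral) (auto intro: nth0_2)

lemma split_ivl: "a \<le> Suc n \<Longrightarrow> n \<le> N \<Longrightarrow> {a..N} = {a..n} \<union> {Suc n..N}" by auto

lemma Qp_split: "a \<le> Suc n \<Longrightarrow> n \<le> N \<Longrightarrow> Qp a N = Qp a n * (Qp (Suc n) N :: 'a::field fps)"
  unfolding Qp_def by (subst split_ivl, assumption, assumption) (rule prod.union_disjoint, auto)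
lemma Bp_split: "a \<le> Suc n \<Longrightarrow> n \<le> N \<Longrightarrow> Bp b a N = Bp b a n * (Bp b (Suc n) N :: 'a::field fps)"
  unfolding Bp_def by (subst split_ivl, assumption, assumption) (rule prod.union_disjoint, auto)

lemma ipp0: "ipp 0 = 1" by (simp add: ipp_def Qp_def)

lemma ippS: "ipp n = (1 - fps_X^Suc n) * (ipp (Suc n) :: 'a::field fps)"
proof -
  have "Qp (Suc 0) (Suc n) = Qp (Suc 0) n * (1 - fps_X^Suc n :: 'a fps)"
    unfolding Qp_def by (simp add: atLeastAtMostSuc_conv mult.commute)
  then have "ipp (Suc n) = ipp n * inverse (1 - fps_X^Suc n :: 'a fps)"
    by (simp add: ipp_def fps_inverse_mult)
  moreover have "(1 - fps_X^Suc n :: 'a fps) * inverse (1 - fps_X^Suc n) = 1"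
    by (rule inverse_mult_eq_1') (simp add: nth0_1)
  ultimately have A: "ipp (Suc n) = ipp n * inverse (1 - fps_X^Suc n :: 'a fps)"
    and B: "(1 - fps_X^Suc n :: 'a fps) * inverse (1 - fps_X^Suc n) = 1" by blast+
  have "ipp n = ipp n * ((1 - fps_X^Suc n :: 'a fps) * inverse (1 - fps_X^Suc n))"
    by (simp only: B mult_1_right)
  also have "\<dots> = (1 - fps_X^Suc n) * (ipp n * inverse (1 - fps_X^Suc n))"
    by (simp only: ac_simps)
  finally show ?thesis by (simp only: A)
qed

lemma TT_RR_fps: "TT fps_X (fps_const b) ipp N = RR fps_X (fps_const b) (ipp :: nat \<Rightarrow> 'a::field fps) N"
  by (rule TT_RR[OF ipp0 ippS])

lemma finite_L:
  "(\<Sum>n\<le>N. fps_X^n * inverse (Qp (Suc 0) n * Bp b (Suc 0) n))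
     = TT fps_X (fps_const b) ipp N * inverse (Bp b (Suc 0) N :: 'a::field fps)"
  unfolding TT_def sum_distrib_right
proof (rule sum.cong[OF refl])
  fix n assume "n \<in> {..N}"
  then have nN: "n \<le> N" by simp
  have 1: "inverse (Bp b (Suc 0) N) = inverse (Bp b (Suc 0) n) * inverse (Bp b (Suc n) N :: 'a fps)"
    by (subst Bp_split[of "Suc 0" n N]) (simp_all add: nN fps_inverse_mult)
  have 2: "Bp b (Suc n) N * inverse (Bp b (Suc n) N :: 'a fps) = 1"
    by (rule inverse_mult_eq_1') (simp add: Bp0)
  have 3: "(\<Prod>k\<in>{Suc n..N}. 1 - fps_const b * fps_X ^ k) = (Bp b (Suc n) N :: 'a fps)"
    by (simp add: Bp_def)
  show "fps_X^n * inverse (Qp (Suc 0) n * Bp b (Suc 0) n) =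
    fps_X ^ n * (\<Prod>k\<in>{Suc n..N}. 1 - fps_const b * fps_X ^ k) * ipp n * inverse (Bp b (Suc 0) N :: 'a fps)"
    unfolding 3 1 ipp_def fps_inverse_mult
  proof -
    have "fps_X ^ n * Bp b (Suc n) N * inverse (Qp (Suc 0) n) * (inverse (Bp b (Suc 0) n) * inverse (Bp b (Suc n) N))
       = fps_X ^ n * (inverse (Qp (Suc 0) n) * inverse (Bp b (Suc 0) n)) * (Bp b (Suc n) N * inverse (Bp b (Suc n) N :: 'a fps))"
      by (simp only: ac_simps)
    then show "fps_X ^ n * (inverse (Qp (Suc 0) n) * inverse (Bp b (Suc 0) n)) = fps_X ^ n * Bp b (Suc n) N * inverse (Qp (Suc 0) n) * (inverse (Bp b (Suc 0) n) * inverse (Bp b (Suc n) N :: 'a fps))"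
      by (simp only: 2 mult_1_right)
  qed
qed

lemma le_choose: "m \<le> Suc m choose 2"
proof (induction m)
  case (Suc m)
  have "Suc (Suc m) choose 2 = (Suc m choose 2) + Suc m"
    by (simp add: choose_two numeral_2_eq_2)
  then show ?case using Suc by simp
qed simp

lemma cc_dvd: "fps_X^m dvd cc fps_X x m"
proof -
  have "fps_X^m dvd (fps_X^(Suc m choose 2) :: 'a fps)"
    by (rule le_imp_power_dvd) (rule le_choose)
  then show ?thesis unfolding cc_def by (metis dvd_mult dvd_mult2)
qed

lemma agr_one_minus: "a \<le> k \<Longrightarrow> agr a (1 - c * fps_X^k) (1 :: 'a::comm_ring_1 fps)"
  unfolding agr_def by (simp add: le_imp_power_dvd)

lemma ipp_agr: "a \<le> N \<Longrightarrow> agr (Suc a) (ipp a) (ipp N :: 'a::field fps)"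
proof -
  assume aN: "a \<le> N"
  have "agr (Suc a) (Qp (Suc a) N) (\<Prod>k\<in>{Suc a..N}. (1::'a fps))"
    unfolding Qp_def
    by (rule agr_prod) (use agr_one_minus[of "Suc a" _ 1] in auto)
  then have "agr (Suc a) (inverse (Qp (Suc a) N)) (inverse (1::'a fps))"
    by (intro agr_inverse) (auto simp: Qp0)
  then have "agr (Suc a) (ipp a * inverse (Qp (Suc a) N)) (ipp a * 1 :: 'a fps)"
    by (intro agr_mult) auto
  moreover have "ipp N = ipp a * inverse (Qp (Suc a) N :: 'a fps)"
    unfolding ipp_def by (subst Qp_split[of "Suc 0" a N]) (simp_all add: aN fps_inverse_mult)
  ultimately show ?thesis by (simp add: agr_sym)
qed

lemma RR_agr: "agr N (RR fps_X (fps_const b) ipp N) ((\<Sum>m<N. cc fps_X (fps_const b) m) * (ipp N :: 'a::field fps))"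
proof -
  let ?c = "cc fps_X (fps_const b) :: nat \<Rightarrow> 'a fps"
  have e: "RR fps_X (fps_const b) ipp N = (\<Sum>m<N. ?c m * ipp (N - m)) + ?c N"
    unfolding RR_def by (simp add: lessThan_Suc_atMost[symmetric] ipp0)
  have t: "agr N (?c m * ipp (N - m)) (?c m * ipp N)" if "m < N" for m
  proof -
    have "fps_X^Suc (N-m) dvd (ipp (N - m) - ipp N :: 'a fps)"
      using ipp_agr[of "N - m" N] unfolding agr_def by simp
    then have "fps_X^m * fps_X^Suc (N-m) dvd ?c m * (ipp (N - m) - ipp N)"
      by (intro mult_dvd_mono cc_dvd)
    then have "fps_X^(m + Suc (N-m)) dvd ?c m * ipp (N - m) - ?c m * ipp N"
      by (simp add: power_add algebra_simps)
    moreover have "fps_X^N dvd (fps_X^(m + Suc (N-m)) :: 'a fps)"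
      by (rule le_imp_power_dvd) simp
    ultimately show ?thesis unfolding agr_def using dvd_trans by blast
  qed
  have "agr N ((\<Sum>m<N. ?c m * ipp (N - m)) + ?c N) ((\<Sum>m<N. ?c m * ipp N) + 0)"
    by (intro agr_add agr_sum t) (auto simp: agr_def cc_dvd)
  then show ?thesis unfolding e by (simp add: sum_distrib_right)
qed



theorem main_gen:
  fixes b :: "'a::field"
  shows "summable (\<lambda>n. fps_X ^ (Suc n) *
            inverse (\<Prod>k=1..Suc n. (1 - fps_X ^ k) * (1 - fps_const b * fps_X ^ k)))
       \<and> summable (\<lambda>n. (- 1) ^ n * fps_X ^ (Suc n choose 2) * fps_const b ^ n)
       \<and> convergent_prod (\<lambda>k. inverse ((1 - fps_X ^ (Suc k)) * (1 - fps_const b * fps_X ^ (Suc k))))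
       \<and> 1 + (\<Sum>n. fps_X ^ (Suc n) *
            inverse (\<Prod>k=1..Suc n. (1 - fps_X ^ k) * (1 - fps_const b * fps_X ^ k)))
         = (\<Sum>n. (- 1) ^ n * fps_X ^ (Suc n choose 2) * fps_const b ^ n)
           * (\<Prod>k. inverse ((1 - fps_X ^ (Suc k)) * (1 - fps_const b * fps_X ^ (Suc k))))"
proof -
  define a :: "nat \<Rightarrow> 'a fps" where "a n = fps_X ^ (Suc n) *
            inverse (\<Prod>k=1..Suc n. (1 - fps_X ^ k) * (1 - fps_const b * fps_X ^ k))" for n
  define \<beta> :: "nat \<Rightarrow> 'a fps" where "\<beta> n = (- 1) ^ n * fps_X ^ (Suc n choose 2) * fps_const b ^ n" for n
  define p :: "nat \<Rightarrow> 'a fps" where "p k = inverse ((1 - fps_X ^ (Suc k)) * (1 - fps_const b * fps_X ^ (Suc k)))" for k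
  define Lf :: "nat \<Rightarrow> 'a fps" where "Lf n = fps_X^n * inverse (Qp (Suc 0) n * Bp b (Suc 0) n)" for n
  have ha: "a n $$ i = 0" if "i < n" for n i
    unfolding a_def fps_X_power_mult_nth using that by simp
  have \<beta>cc: "\<beta> n = cc fps_X (fps_const b) n" for n by (simp add: \<beta>_def cc_def)
  have h\<beta>: "\<beta> n $$ i = 0" if "i < n" for n i
    using cc_dvd[of n "fps_const b"] that unfolding \<beta>cc X_pow_dvd_iff by blast
  have hp: "agr (Suc k) (p k) 1" for k
  proof -
    have "agr (Suc k) ((1 - 1 * fps_X ^ (Suc k)) * (1 - fps_const b * fps_X ^ (Suc k))) (1 * 1 :: 'a fps)"
      by (intro agr_mult agr_one_minus) auto
    then have "agr (Suc k) (inverse ((1 - fps_X ^ (Suc k)) * (1 - fps_const b * fps_X ^ (Suc k)))) (inverse 1 :: 'a fps)"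
      by (intro agr_inverse) (auto simp: nth0_1 nth0_2 simp del: power_Suc)
    then show ?thesis by (simp add: p_def)
  qed
  note SA = fps_sums_lemma[of a, OF ha]
  note SB = fps_sums_lemma[of \<beta>, OF h\<beta>]
  note SP = fps_prod_lemma[of p, OF hp]
  have prodconv: "(\<Prod>k=1..n. (1 - fps_X ^ k) * (1 - fps_const b * fps_X ^ k)) = Qp (Suc 0) n * (Bp b (Suc 0) n :: 'a fps)" for n
    by (simp add: Qp_def Bp_def prod.distrib)
  have aL: "a n = Lf (Suc n)" for n unfolding a_def Lf_def prodconv ..
  have L0: "Lf 0 = 1" by (simp add: Lf_def Qp_def Bp_def)
  have pp: "(\<Prod>k<N. p k) = ipp N * inverse (Bp b (Suc 0) N)" for N
  proof -
    have "(\<Prod>k<N. p k) = inverse (\<Prod>k<N. (1 - fps_X ^ (Suc k)) * (1 - fps_const b * fps_X ^ (Suc k)))"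
      by (simp add: p_def inverse_prod_fps)
    also have "(\<Prod>k<N. (1 - fps_X ^ (Suc k)) * (1 - fps_const b * fps_X ^ (Suc k)))
          = (\<Prod>k\<in>{Suc 0..N}. (1 - fps_X ^ k) * (1 - fps_const b * fps_X ^ k) :: 'a fps)"
      by (rule prod.atLeast1_atMost_eq[symmetric])
    also have "\<dots> = Qp (Suc 0) N * Bp b (Suc 0) N"
      by (simp add: Qp_def Bp_def prod.distrib)
    finally show ?thesis by (simp add: ipp_def fps_inverse_mult)
  qed
  have main: "agr N (1 + suminf a) (suminf \<beta> * prodinf p)" for N
  proof -
    have s1: "agr N (1 + suminf a) (1 + (\<Sum>n<N. a n))"
      by (intro agr_add SA(2)) simp
    have "1 + (\<Sum>n<N. a n) = (\<Sum>n\<le>N. Lf n)"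
      by (simp add: sum.atMost_shift aL L0)
    also have "\<dots> = TT fps_X (fps_const b) ipp N * inverse (Bp b (Suc 0) N)"
      unfolding Lf_def by (rule finite_L)
    also have "\<dots> = RR fps_X (fps_const b) ipp N * inverse (Bp b (Suc 0) N)"
      by (simp add: TT_RR_fps)
    finally have s2: "1 + (\<Sum>n<N. a n) = RR fps_X (fps_const b) ipp N * inverse (Bp b (Suc 0) N)" .
    have s3: "agr N (RR fps_X (fps_const b) ipp N * inverse (Bp b (Suc 0) N))
         ((\<Sum>m<N. cc fps_X (fps_const b) m) * ipp N * inverse (Bp b (Suc 0) N))"
      by (intro agr_mult RR_agr agr_refl)
    have s4: "(\<Sum>m<N. cc fps_X (fps_const b) m) * ipp N * inverse (Bp b (Suc 0) N) = (\<Sum>m<N. \<beta> m) * (\<Prod>k<N. p k)"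
      by (simp add: pp \<beta>cc mult.assoc)
    have s5: "agr N (suminf \<beta> * prodinf p) ((\<Sum>m<N. \<beta> m) * (\<Prod>k<N. p k))"
      by (intro agr_mult SB(2) SP(2))
    show ?thesis using s1 s2 s3 s4 s5 by (metis agr_sym agr_trans)
  qed
  have "1 + suminf a = suminf \<beta> * prodinf p" by (rule agr_eq) (rule main)
  then show ?thesis using SA(1) SB(1) SP(1) unfolding a_def \<beta>_def p_def by blast
qed


theorem mainTheorem2:
  shows "summable (\<lambda>n. qvar ^ (Suc n) *
            inverse (\<Prod>k=1..Suc n. (1 - qvar ^ k) * (1 - bconst * qvar ^ k)))
       \<and> summable (\<lambda>n. (- 1) ^ n * qvar ^ (Suc n choose 2) * bconst ^ n)
       \<and> convergent_prod (\<lambda>k. inverse ((1 - qvar ^ (Suc k)) * (1 - bconst * qvar ^ (Suc k))))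
       \<and> 1 + (\<Sum>n. qvar ^ (Suc n) *
            inverse (\<Prod>k=1..Suc n. (1 - qvar ^ k) * (1 - bconst * qvar ^ k)))
         = (\<Sum>n. (- 1) ^ n * qvar ^ (Suc n choose 2) * bconst ^ n)
           * (\<Prod>k. inverse ((1 - qvar ^ (Suc k)) * (1 - bconst * qvar ^ (Suc k))))"
  by (rule main_gen)

end
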